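(* Let $1\le p\le\infty$, let $X,Y$ be real Banach spaces, let $U\subseteq X$ be an open convex subset, and let $f:U\to Y$ be a (Fréchet) differentiable mapping such that for every $U$-bounded Dunford-Pettis set $K\subset U$, the set $f'(K)$ is a $p$-$(DPL)$ set in $L(X,Y)$. Then $f$ is $p$-Right sequentially continuous.
   Context: A subset $B\subset U$ is $U$-bounded if it is bounded and its distance to the boundary of $U$ is strictly positive; a sequence is $U$-bounded if its set of terms is. A sequence $(x_n)$ in $X$ is weakly $p$-summable if $(x^*(x_n))_n\in\ell_p$ for every $x^*\in X^*$ (for $p=\infty$: weakly null). A sequence $(x_n)$ is weakly $p$-Cauchy if $(x_{m_k}-x_{n_k})_k$ is weakly $p$-summable for all strictly increasing index sequences $(m_k),(n_k)$. A bounded set $K\subset X$ is a Dunford-Pettis set if every weakly null sequence in $X^*$ converges to $0$ uniformly on $K$. A $p$-Right null (resp. $p$-Right Cauchy) sequence is a weakly $p$-summable (resp. weakly $p$-Cauchy) sequence whose set of terms is a Dunford-Pettis set. A set $K\subset L(X,Y)$ is a $p$-$(DPL)$ set if $\lim_n\sup_{T\in K}\|T(x_n)\|=0$ for every $p$-Right null sequence $(x_n)$ in $X$. A mapping $f:U\to Y$ is $p$-Right sequentially continuous if it takes $p$-Right Cauchy $U$-bounded sequences of $U$ into norm convergent sequences in $Y$. *)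

theory Defs
  imports "HOL-Analysis.Analysis"
begin

definition weakly_null :: "(nat \<Rightarrow> 'a::real_normed_vector) \<Rightarrow> bool" where
  "weakly_null x \<longleftrightarrow> (\<forall>\<phi> :: 'a \<Rightarrow>\<^sub>L real. (\<lambda>n. blinfun_apply \<phi> (x n)) \<longlonglongrightarrow> 0)"

definition weakly_p_summable :: "ereal \<Rightarrow> (nat \<Rightarrow> 'a::real_normed_vector) \<Rightarrow> bool" where
  "weakly_p_summable p x \<longleftrightarrow>
     (if p = \<infinity> then weakly_null x
      else (\<forall>\<phi> :: 'a \<Rightarrow>\<^sub>L real. summable (\<lambda>n. \<bar>blinfun_apply \<phi> (x n)\<bar> powr real_of_ereal p)))"

definition weakly_p_cauchy :: "ereal \<Rightarrow> (nat \<Rightarrow> 'a::real_normed_vector) \<Rightarrow> bool" where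
  "weakly_p_cauchy p x \<longleftrightarrow>
     (\<forall>m n :: nat \<Rightarrow> nat. strict_mono m \<and> strict_mono n \<longrightarrow>
        weakly_p_summable p (\<lambda>k. x (m k) - x (n k)))"

definition DP_set :: "'a::real_normed_vector set \<Rightarrow> bool" where
  "DP_set K \<longleftrightarrow> bounded K \<and>
     (\<forall>xs :: nat \<Rightarrow> ('a \<Rightarrow>\<^sub>L real). weakly_null xs \<longrightarrow>
        (\<forall>e>0. \<forall>\<^sub>F n in sequentially. \<forall>k\<in>K. \<bar>blinfun_apply (xs n) k\<bar> < e))"

definition p_right_null :: "ereal \<Rightarrow> (nat \<Rightarrow> 'a::real_normed_vector) \<Rightarrow> bool" where
  "p_right_null p x \<longleftrightarrow> weakly_p_summable p x \<and> DP_set (range x)"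

definition p_right_cauchy :: "ereal \<Rightarrow> (nat \<Rightarrow> 'a::real_normed_vector) \<Rightarrow> bool" where
  "p_right_cauchy p x \<longleftrightarrow> weakly_p_cauchy p x \<and> DP_set (range x)"

definition p_DPL_set :: "ereal \<Rightarrow> ('a::real_normed_vector \<Rightarrow>\<^sub>L 'b::real_normed_vector) set \<Rightarrow> bool" where
  "p_DPL_set p K \<longleftrightarrow>
     (\<forall>x. p_right_null p x \<longrightarrow>
        (\<forall>e>0. \<forall>\<^sub>F n in sequentially. \<forall>T\<in>K. norm (blinfun_apply T (x n)) < e))"

text \<open>U-bounded subset: bounded subset of U at strictly positive distance from the
  boundary of U (vacuous distance condition if the boundary is empty).\<close>
definition U_bounded :: "'a::real_normed_vector set \<Rightarrow> 'a set \<Rightarrow> bool" where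
  "U_bounded U B \<longleftrightarrow> B \<subseteq> U \<and> bounded B \<and>
     (\<exists>\<delta>>0. \<forall>b\<in>B. \<forall>z\<in>frontier U. \<delta> \<le> dist b z)"

definition p_right_seq_continuous ::
  "ereal \<Rightarrow> 'a::real_normed_vector set \<Rightarrow> ('a \<Rightarrow> 'b::real_normed_vector) \<Rightarrow> bool" where
  "p_right_seq_continuous p U f \<longleftrightarrow>
     (\<forall>x. p_right_cauchy p x \<and> U_bounded U (range x) \<longrightarrow> convergent (\<lambda>n. f (x n)))"

end

theory Submission
  imports Defs
begin

lemma mvt_seg:
  fixes f :: "'a::real_normed_vector \<Rightarrow> 'b::real_normed_vector"
  assumes seg: "\<And>t. t\<in>{0..1} \<Longrightarrow> b + t *\<^sub>R (a-b) \<in> U"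
    and der: "\<And>x. x\<in>U \<Longrightarrow> (f has_derivative blinfun_apply (Df x)) (at x)"
    and bnd: "\<And>t. t\<in>{0..1} \<Longrightarrow> norm (blinfun_apply (Df (b + t *\<^sub>R (a-b))) (a-b)) \<le> B"
  shows "norm (f a - f b) \<le> B"
proof -
  define g where "g t = f (b + t *\<^sub>R (a-b))" for t :: real
  have d: "(g has_derivative (\<lambda>h. h *\<^sub>R blinfun_apply (Df (b + t *\<^sub>R (a-b))) (a-b))) (at t within {0..1})"
    if "t \<in> {0..1}" for t
  proof -
    have i: "((\<lambda>t. b + t *\<^sub>R (a-b)) has_derivative (\<lambda>h. h *\<^sub>R (a-b))) (at t)"
      by (auto intro!: derivative_eq_intros)
    have "(g has_derivative (\<lambda>h. blinfun_apply (Df (b + t *\<^sub>R (a-b))) (h *\<^sub>R (a-b)))) (at t)"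
      unfolding g_def using diff_chain_at[OF i der[OF seg[OF that]]] by (simp add: o_def)
    then show ?thesis by (auto intro: has_derivative_at_withinI simp: blinfun.scaleR_right)
  qed
  have o: "onorm (\<lambda>h. h *\<^sub>R blinfun_apply (Df (b + t *\<^sub>R (a-b))) (a-b)) \<le> B" if "t \<in> {0..1}" for t
  proof (rule onorm_bound)
    have "0 \<le> norm (blinfun_apply (Df (b + t *\<^sub>R (a-b))) (a-b))" by simp
    then show "0 \<le> B" using bnd[OF that] by linarith
    fix h :: real
    show "norm (h *\<^sub>R blinfun_apply (Df (b + t *\<^sub>R (a-b))) (a-b)) \<le> B * norm h"
    proof -
      have "norm (blinfun_apply (Df (b + t *\<^sub>R (a-b))) (a-b)) * \<bar>h\<bar> \<le> B * \<bar>h\<bar>"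
        using bnd[OF that] by (rule mult_right_mono) simp
      then show ?thesis by (simp add: mult.commute)
    qed
  qed
  have "norm (g 1 - g 0) \<le> B * norm (1 - 0::real)"
    by (rule differentiable_bound[OF convex_real_interval(5) d o]) auto
  then show ?thesis by (simp add: g_def)
qed

lemma ball_in_open:
  fixes U :: "'a::real_normed_vector set"
  assumes "open U" "b \<in> U" "\<forall>z\<in>frontier U. \<delta> \<le> dist b z"
  shows "ball b \<delta> \<subseteq> U"
proof
  fix y assume y: "y \<in> ball b \<delta>"
  show "y \<in> U"
  proof (rule ccontr)
    assume "y \<notin> U"
    then have "closed_segment b y \<inter> frontier U \<noteq> {}"
      using connected_Int_frontier[of "closed_segment b y" U] assms(2) by auto
    then obtain z where z: "z \<in> closed_segment b y" "z \<in> frontier U" by auto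
    have "dist b z \<le> dist b y" using z(1) using segment_bound1[OF z(1)] by (simp add: dist_norm norm_minus_commute)
    then show False using assms(3) z(2) y by (auto simp: dist_commute)
  qed
qed

lemma seg_eq: "b + t *\<^sub>R (a - b) = (1 - t) *\<^sub>R b + t *\<^sub>R (a::'a::real_vector)"
  by (simp add: algebra_simps)

lemma conv_lt:
  fixes t A C e :: real
  assumes "t \<in> {0..1}" "\<bar>A\<bar> < e/2" "\<bar>C\<bar> < e/2"
  shows "\<bar>(1-t) * A + t * C\<bar> < e"
proof -
  have "\<bar>(1-t) * A + t * C\<bar> \<le> (1-t) * \<bar>A\<bar> + t * \<bar>C\<bar>"
    using assms(1) by (auto simp: abs_mult intro!: order.trans[OF abs_triangle_ineq])
  also have "\<dots> \<le> (1-t) * (e/2) + t * (e/2)"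
    using assms by (intro add_mono mult_left_mono) auto
  also have "\<dots> = e/2" by (simp add: field_simps)
  also have "\<dots> < e" using assms(2) by linarith
  finally show ?thesis .
qed

lemma K_DP:
  fixes x :: "nat \<Rightarrow> 'a::real_normed_vector"
  assumes "DP_set (range x)"
  shows "DP_set {b + t *\<^sub>R (a - b) | a b t. a \<in> range x \<and> b \<in> range x \<and> t \<in> {0..1}}"
proof -
  from assms obtain B where B: "\<And>n. norm (x n) \<le> B"
    unfolding DP_set_def bounded_iff by auto
  have bd: "bounded {b + t *\<^sub>R (a - b) | a b t. a \<in> range x \<and> b \<in> range x \<and> t \<in> {0..1}}"
    unfolding bounded_iff
  proof (intro exI[of _ B] ballI)
    fix y assume "y \<in> {b + t *\<^sub>R (a - b) | a b t. a \<in> range x \<and> b \<in> range x \<and> t \<in> {0..1}}"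
    then obtain i j t where y: "y = (1 - t) *\<^sub>R x j + t *\<^sub>R x i" and t: "t \<in> {0..1}"
      using seg_eq by blast
    have "norm y \<le> (1-t) * norm (x j) + t * norm (x i)"
      unfolding y using t by (auto intro!: order.trans[OF norm_triangle_ineq])
    also have "\<dots> \<le> (1-t) * B + t * B" using t B by (intro add_mono mult_left_mono) auto
    finally show "norm y \<le> B" by (simp add: algebra_simps)
  qed
  show ?thesis unfolding DP_set_def
  proof (intro conjI bd allI impI)
    fix xs :: "nat \<Rightarrow> ('a \<Rightarrow>\<^sub>L real)" and e :: real
    assume wn: "weakly_null xs" and e: "e > 0"
    then have "\<forall>\<^sub>F n in sequentially. \<forall>k\<in>range x. \<bar>blinfun_apply (xs n) k\<bar> < e/2"
      using assms wn half_gt_zero[OF e] unfolding DP_set_def by blast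
    then show "\<forall>\<^sub>F n in sequentially. \<forall>k\<in>{b + t *\<^sub>R (a - b) | a b t. a \<in> range x \<and> b \<in> range x \<and> t \<in> {0..1}}. \<bar>blinfun_apply (xs n) k\<bar> < e"
    proof (rule eventually_mono)
      fix n assume h: "\<forall>k\<in>range x. \<bar>blinfun_apply (xs n) k\<bar> < e/2"
      show "\<forall>k\<in>{b + t *\<^sub>R (a - b) | a b t. a \<in> range x \<and> b \<in> range x \<and> t \<in> {0..1}}. \<bar>blinfun_apply (xs n) k\<bar> < e"
      proof
        fix y assume "y \<in> {b + t *\<^sub>R (a - b) | a b t. a \<in> range x \<and> b \<in> range x \<and> t \<in> {0..1}}"
        then obtain i j t where y: "y = (1 - t) *\<^sub>R x j + t *\<^sub>R x i" and t: "t \<in> {0..1}"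
          using seg_eq by blast
        have "\<bar>(1-t) * blinfun_apply (xs n) (x j) + t * blinfun_apply (xs n) (x i)\<bar> < e"
          using conv_lt[OF t] h by auto
        then show "\<bar>blinfun_apply (xs n) y\<bar> < e"
          unfolding y by (simp add: blinfun.add_right blinfun.scaleR_right)
      qed
    qed
  qed
qed

lemma K_Ub:
  fixes x :: "nat \<Rightarrow> 'a::real_normed_vector"
  assumes "U_bounded U (range x)" "open U" "convex U" "DP_set (range x)"
  shows "U_bounded U {b + t *\<^sub>R (a - b) | a b t. a \<in> range x \<and> b \<in> range x \<and> t \<in> {0..1}}"
proof -
  from assms(1) obtain \<delta> where d: "\<delta> > 0" "\<forall>b\<in>range x. \<forall>z\<in>frontier U. \<delta> \<le> dist b z"
    and sub: "range x \<subseteq> U" unfolding U_bounded_def by auto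
  have balls: "ball (x i) \<delta> \<subseteq> U" for i
  proof -
    have xi: "x i \<in> U" using sub by auto
    show ?thesis using ball_in_open[OF assms(2) xi, of \<delta>] d(2) by auto
  qed
  have cb: "ball y \<delta> \<subseteq> U" if Y: "y \<in> {b + t *\<^sub>R (a - b) | a b t. a \<in> range x \<and> b \<in> range x \<and> t \<in> {0..1}}" for y
  proof
    obtain i j t where y: "y = (1 - t) *\<^sub>R x j + t *\<^sub>R x i" and t: "t \<in> {0..1}"
      using Y seg_eq by blast
    fix w assume w: "w \<in> ball y \<delta>"
    have e: "w = (1 - t) *\<^sub>R (x j + (w - y)) + t *\<^sub>R (x i + (w - y))"
      unfolding y by (simp add: algebra_simps)
    have "x j + (w - y) \<in> U" "x i + (w - y) \<in> U"
    proof -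
      have "norm (w - y) < \<delta>" using w by (simp add: dist_norm norm_minus_commute)
      then have "x k + (w - y) \<in> ball (x k) \<delta>" for k
        by (simp add: dist_norm norm_minus_commute)
      then show "x j + (w - y) \<in> U" "x i + (w - y) \<in> U"
        using balls by blast+
    qed
    then have "(1 - t) *\<^sub>R (x j + (w - y)) + t *\<^sub>R (x i + (w - y)) \<in> U"
      using assms(3) t unfolding convex_def by auto
    then show "w \<in> U" by (simp only: e[symmetric])
  qed
  show ?thesis unfolding U_bounded_def
  proof (intro conjI)
    show "{b + t *\<^sub>R (a - b) | a b t. a \<in> range x \<and> b \<in> range x \<and> t \<in> {0..1}} \<subseteq> U"
      using cb d(1) by (meson centre_in_ball subset_iff)
    show "bounded {b + t *\<^sub>R (a - b) | a b t. a \<in> range x \<and> b \<in> range x \<and> t \<in> {0..1}}"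
      using K_DP[OF assms(4)] unfolding DP_set_def by auto
    show "\<exists>\<delta>>0. \<forall>b\<in>{b + t *\<^sub>R (a - b) | a b t. a \<in> range x \<and> b \<in> range x \<and> t \<in> {0..1}}. \<forall>z\<in>frontier U. \<delta> \<le> dist b z"
    proof (intro exI[of _ \<delta>] conjI d(1) ballI)
      fix y z assume y: "y \<in> {b + t *\<^sub>R (a - b) | a b t. a \<in> range x \<and> b \<in> range x \<and> t \<in> {0..1}}"
        and z: "z \<in> frontier U"
      have "z \<notin> U" using z assms(2) by (simp add: frontier_def interior_open)
      then show "\<delta> \<le> dist y z" using cb[OF y] by (force simp: subset_iff)
    qed
  qed
qed

theorem theorem3p7:
  fixes p :: ereal
    and U :: "'a::banach set"
    and f :: "'a \<Rightarrow> 'b::banach"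
    and Df :: "'a \<Rightarrow> ('a \<Rightarrow>\<^sub>L 'b)"
  assumes "1 \<le> p"
    and "open U" and "convex U"
    and "\<And>x. x \<in> U \<Longrightarrow> (f has_derivative blinfun_apply (Df x)) (at x)"
    and "\<And>K. U_bounded U K \<Longrightarrow> DP_set K \<Longrightarrow> p_DPL_set p (Df ` K)"
  shows "p_right_seq_continuous p U f"
  unfolding p_right_seq_continuous_def
proof (intro allI impI)
  fix x :: "nat \<Rightarrow> 'a"
  assume H: "p_right_cauchy p x \<and> U_bounded U (range x)"
  then have wc: "weakly_p_cauchy p x" and DP: "DP_set (range x)" and Ub: "U_bounded U (range x)"
    unfolding p_right_cauchy_def by auto
  define K where "K = {b + t *\<^sub>R (a - b) | a b t. a \<in> range x \<and> b \<in> range x \<and> t \<in> {0..1}}"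
  have KUb: "U_bounded U K" unfolding K_def by (rule K_Ub[OF Ub assms(2,3) DP])
  have KDP: "DP_set K" unfolding K_def by (rule K_DP[OF DP])
  have DPL: "p_DPL_set p (Df ` K)" by (rule assms(5)[OF KUb KDP])
  have KU: "K \<subseteq> U" using KUb unfolding U_bounded_def by auto
  have "Cauchy (\<lambda>n. f (x n))"
  proof (rule ccontr)
    assume "\<not> Cauchy (\<lambda>n. f (x n))"
    then obtain e where e: "e > 0" and ex: "\<forall>N. \<exists>m\<ge>N. \<exists>n\<ge>N. e \<le> dist (f (x m)) (f (x n))"
      unfolding Cauchy_def by (auto simp: not_less)
    then obtain M Nn where MN: "\<And>N. M N \<ge> N \<and> Nn N \<ge> N \<and> e \<le> dist (f (x (M N))) (f (x (Nn N)))"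
      by metis
    define s where "s = rec_nat 0 (\<lambda>_ j. max (M j) (Nn j) + 1)"
    have sS: "s (Suc k) = max (M (s k)) (Nn (s k)) + 1" for k by (simp add: s_def)
    define mm where "mm k = M (s k)" for k
    define nn where "nn k = Nn (s k)" for k
    have smm: "strict_mono mm"
      unfolding strict_mono_Suc_iff mm_def
    proof
      fix k have "M (s (Suc k)) \<ge> s (Suc k)" using MN by blast
      then show "M (s k) < M (s (Suc k))" using sS[of k] by linarith
    qed
    have snn: "strict_mono nn"
      unfolding strict_mono_Suc_iff nn_def
    proof
      fix k have "Nn (s (Suc k)) \<ge> s (Suc k)" using MN by blast
      then show "Nn (s k) < Nn (s (Suc k))" using sS[of k] by linarith
    qed
    define d where "d k = x (mm k) - x (nn k)" for k
    have wsd: "weakly_p_summable p d"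
      using wc smm snn unfolding weakly_p_cauchy_def d_def by blast
    have bd: "bounded (range d)"
    proof -
      obtain B where B: "\<And>n. norm (x n) \<le> B" using DP unfolding DP_set_def bounded_iff by auto
      have "norm (d k) \<le> B + B" for k
        unfolding d_def using B[of "mm k"] B[of "nn k"] norm_triangle_ineq4[of "x (mm k)" "x (nn k)"]
        by linarith
      then show ?thesis unfolding bounded_iff by blast
    qed
    have "DP_set (range d)" unfolding DP_set_def
    proof (intro conjI bd allI impI)
      fix xs :: "nat \<Rightarrow> ('a \<Rightarrow>\<^sub>L real)" and e :: real
      assume wn: "weakly_null xs" and e: "e > 0"
      then have "\<forall>\<^sub>F n in sequentially. \<forall>k\<in>range x. \<bar>blinfun_apply (xs n) k\<bar> < e/2"
        using DP wn half_gt_zero[OF e] unfolding DP_set_def by blast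
      then show "\<forall>\<^sub>F n in sequentially. \<forall>k\<in>range d. \<bar>blinfun_apply (xs n) k\<bar> < e"
      proof (rule eventually_mono)
        fix n assume h: "\<forall>k\<in>range x. \<bar>blinfun_apply (xs n) k\<bar> < e/2"
        show "\<forall>k\<in>range d. \<bar>blinfun_apply (xs n) k\<bar> < e"
        proof
          fix y assume "y \<in> range d"
          then obtain k where y: "y = x (mm k) - x (nn k)" unfolding d_def by auto
          have "\<bar>blinfun_apply (xs n) (x (mm k)) - blinfun_apply (xs n) (x (nn k))\<bar> < e"
            using h[rule_format, OF rangeI[of _ "mm k"]] h[rule_format, OF rangeI[of _ "nn k"]]
            by linarith
          then show "\<bar>blinfun_apply (xs n) y\<bar> < e" unfolding y by (simp add: blinfun.diff_right)
        qed
      qed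
    qed
    then have "p_right_null p d" using wsd unfolding p_right_null_def by auto
    then have "\<forall>\<^sub>F n in sequentially. \<forall>T\<in>Df ` K. norm (blinfun_apply T (d n)) < e/2"
      using DPL half_gt_zero[OF e] unfolding p_DPL_set_def by blast
    then obtain k where k: "\<forall>T\<in>Df ` K. norm (blinfun_apply T (d k)) < e/2"
      using eventually_sequentially by auto
    have segK: "x (nn k) + t *\<^sub>R (x (mm k) - x (nn k)) \<in> K" if "t \<in> {0..1}" for t
      unfolding K_def using that by blast
    have "norm (f (x (mm k)) - f (x (nn k))) \<le> e/2"
    proof (rule mvt_seg[where U=U and Df=Df])
      fix t :: real assume t: "t \<in> {0..1}"
      show "x (nn k) + t *\<^sub>R (x (mm k) - x (nn k)) \<in> U" using segK[OF t] KU by auto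
      show "norm (blinfun_apply (Df (x (nn k) + t *\<^sub>R (x (mm k) - x (nn k)))) (x (mm k) - x (nn k))) \<le> e/2"
        using k segK[OF t] unfolding d_def by (meson imageI less_imp_le)
    next
      fix y assume "y \<in> U" then show "(f has_derivative blinfun_apply (Df y)) (at y)" by (rule assms(4))
    qed
    moreover have "e \<le> dist (f (x (mm k))) (f (x (nn k)))" using MN unfolding mm_def nn_def by blast
    ultimately show False using e by (simp add: dist_norm)
  qed
  then show "convergent (\<lambda>n. f (x n))" by (simp add: Cauchy_convergent_iff)
qed

end
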